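(* Assume $\Phi^{y,\mathrm{app}}\in L^1_{\mu_\theta}$ and $\Phi^{y,\mathrm{joint}}\in L^1_{\mu_\theta\otimes\mu_\delta}$. Then $$\max\{d_{\mathrm{KL}}(\mu^{y,\mathrm{app}}_{\theta,\delta}\Vert\mu^{y,\mathrm{joint}}_{\theta,\delta}),d_{\mathrm{KL}}(\mu^{y,\mathrm{joint}}_{\theta,\delta}\Vert\mu^{y,\mathrm{app}}_{\theta,\delta})\}\le C\Big\|\,|\mathcal{O}\delta(\theta)|^2_{\Sigma_\varepsilon^{-1}}\Big\|^{1/2}_{L^1_{\mathbb{P}}},$$ where $C=2^{1/2}\exp\big(2\|\Phi^{y,\mathrm{joint}}\|_{L^1_{\mu_\theta\otimes\mu_\delta}}+2\|\Phi^{y,\mathrm{app}}\|_{L^1_{\mu_\theta}}\big)\big(\|\Phi^{y,\mathrm{joint}}\|^{1/2}_{L^1_{\mu_\theta\otimes\mu_\delta}}+\|\Phi^{y,\mathrm{app}}\|^{1/2}_{L^1_{\mu_\theta}}\big)$.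
   Context: Let $\Theta$ be a Borel subset of a separable Banach space and $\mu_\theta$ a Borel probability measure on $\Theta$. Let $\mathcal{U}$ be a Banach space, $n\in\mathbb{N}$, $\mathcal{O}:\mathcal{U}\to\mathbb{R}^n$ continuous linear, $\mathcal{M}:\Theta\to\mathcal{U}$ measurable. Let $\Sigma_\varepsilon\in\mathbb{R}^{n\times n}$ be symmetric positive definite, $y\in\mathbb{R}^n$ fixed, $|a|_L:=(a^\top La)^{1/2}$. Let $\Delta$ be a Radon space whose elements $\delta'$ are maps $\Theta\to\mathcal{U}$ with $(\theta',\delta')\mapsto\delta'(\theta')$ jointly measurable, and $\mu_\delta$ a Borel probability measure on $\Delta$. Misfits: $\Phi^{y,\mathrm{app}}(\theta')=\tfrac12|y-\mathcal{O}\mathcal{M}(\theta')|^2_{\Sigma_\varepsilon^{-1}}$, lifted by $\Phi^{y,\mathrm{app}}(\theta',\delta'):=\Phi^{y,\mathrm{app}}(\theta')$; $\Phi^{y,\mathrm{joint}}(\theta',\delta')=\tfrac12|y-\mathcal{O}\mathcal{M}(\theta')-\mathcal{O}\delta'(\theta')|^2_{\Sigma_\varepsilon^{-1}}$. For a probability measure $\mu$ and measurable $\Phi\ge0$, $\mu_\Phi$ has density $\exp(-\Phi)/\int\exp(-\Phi)d\mu$ w.r.t. $\mu$. $\mu^{y,\mathrm{app}}_{\theta,\delta}:=(\mu_\theta\otimes\mu_\delta)_{\Phi^{y,\mathrm{app}}}$, $\mu^{y,\mathrm{joint}}_{\theta,\delta}:=(\mu_\theta\otimes\mu_\delta)_{\Phi^{y,\mathrm{joint}}}$.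 $\theta\sim\mu_\theta$, $\delta\sim\mu_\delta$ independent under $\mathbb{P}$, so $\|F(\theta,\delta)\|_{L^1_{\mathbb{P}}}=\int|F|\,d(\mu_\theta\otimes\mu_\delta)$. $d_{\mathrm{KL}}(\mu\Vert\nu)=\int\log\frac{d\mu}{d\nu}d\mu$ if $\mu\ll\nu$, $+\infty$ otherwise. *)

theory Defs
  imports "HOL-Probability.Probability"
begin

definition wnorm2 :: "real^'n^'n \<Rightarrow> real^'n \<Rightarrow> real" where
  "wnorm2 L a = a \<bullet> (L *v a)"

definition reweight :: "'a measure \<Rightarrow> ('a \<Rightarrow> real) \<Rightarrow> 'a measure" where
  "reweight \<mu> \<Phi> = density \<mu> (\<lambda>x. ennreal (exp (- \<Phi> x) / (\<integral>z. exp (- \<Phi> z) \<partial>\<mu>)))"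

definition KL_div :: "'a measure \<Rightarrow> 'a measure \<Rightarrow> ereal" where
  "KL_div \<mu> \<nu> =
    (if sets \<mu> = sets \<nu> \<and> absolutely_continuous \<nu> \<mu> then
       enn2ereal (\<integral>\<^sup>+ x. ennreal (ln (enn2real (RN_deriv \<nu> \<mu> x))) \<partial>\<mu>)
     - enn2ereal (\<integral>\<^sup>+ x. ennreal (- ln (enn2real (RN_deriv \<nu> \<mu> x))) \<partial>\<mu>)
     else \<infinity>)"

definition radon_space :: "'d::t2_space itself \<Rightarrow> bool" where
  "radon_space _ \<longleftrightarrow>
    (\<forall>\<mu>::'d measure. sets \<mu> = sets borel \<and> prob_space \<mu> \<longrightarrow>
       (\<forall>B\<in>sets borel. emeasure \<mu> B = (SUP K\<in>{K. K \<subseteq> B \<and> compact K}. emeasure \<mu> K)))"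

end

theory Submission imports Defs begin


lemma exp_diff_le:
  fixes a b :: real assumes "0 \<le> a" "0 \<le> b"
  shows "exp (- b) - exp (- a) \<le> \<bar>a - b\<bar>"
proof (cases "b \<le> a")
  case False
  hence "exp (-b) \<le> exp (-a)" by simp
  thus ?thesis using False by linarith
next
  case True
  have x: "exp (-b) * exp (b - a) = exp (-a)" by (simp flip: exp_add)
  have e: "exp (-b) - exp (-a) = exp (-b) * (1 - exp (b - a))"
    unfolding right_diff_distrib x by simp
  have h1: "1 - exp (b - a) \<le> a - b" using exp_ge_add_one_self[of "b - a"] by linarith
  have h2: "0 \<le> 1 - exp (b - a)" using True by simp
  have h3: "exp (-b) \<le> 1" using assms by simp
  have "exp (-b) * (1 - exp (b - a)) \<le> 1 * (1 - exp (b - a))"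
    by (rule mult_right_mono[OF h3 h2])
  thus ?thesis using e True h1 by simp
qed

lemma quad_disc:
  fixes a b c :: real
  assumes "\<And>t. 0 \<le> a + 2 * b * t + c * t^2" "0 \<le> c"
  shows "b^2 \<le> a * c"
proof (cases "c = 0")
  case True
  have "b = 0"
  proof (rule ccontr)
    assume "b \<noteq> 0"
    have "0 \<le> a + 2 * b * (-(a+1)/(2*b))" using assms(1)[of "-(a+1)/(2*b)"] True by simp
    also have "\<dots> = -1" using \<open>b \<noteq> 0\<close> by (simp add: field_simps)
    finally show False by simp
  qed
  thus ?thesis using True by simp
next
  case False
  hence c: "c > 0" using assms(2) by simp
  have "0 \<le> a + 2 * b * (-b/c) + c * (-b/c)^2" by (rule assms(1))
  also have "\<dots> = a - b^2/c" using c by (simp add: field_simps power2_eq_square)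
  finally have "b^2/c \<le> a" by simp
  thus ?thesis using c by (simp add: field_simps mult.commute)
qed

definition bf :: "real^'n^'n \<Rightarrow> real^'n \<Rightarrow> real^'n \<Rightarrow> real" where
  "bf L x z = (x \<bullet> (L *v z) + z \<bullet> (L *v x)) / 2"

lemma wnorm2_add: "wnorm2 L (x + z) = wnorm2 L x + 2 * bf L x z + wnorm2 L z"
  unfolding wnorm2_def bf_def
  by (simp add: matrix_vector_right_distrib inner_add_left inner_add_right algebra_simps)

lemma wnorm2_scale: "wnorm2 L (t *\<^sub>R x) = t^2 * wnorm2 L x"
  unfolding wnorm2_def by (simp add: matrix_vector_mult_scaleR power2_eq_square)

lemma bf_scale: "bf L x (t *\<^sub>R z) = t * bf L x z"
  unfolding bf_def by (simp add: matrix_vector_mult_scaleR algebra_simps)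

lemma bf_CS:
  assumes psd: "\<And>v. 0 \<le> wnorm2 L v"
  shows "\<bar>bf L x z\<bar> \<le> sqrt (wnorm2 L x) * sqrt (wnorm2 L z)"
proof -
  have "(bf L x z)^2 \<le> wnorm2 L x * wnorm2 L z"
  proof (rule quad_disc)
    fix t
    show "0 \<le> wnorm2 L x + 2 * bf L x z * t + wnorm2 L z * t^2"
      using psd[of "x + t *\<^sub>R z"] by (simp add: wnorm2_add wnorm2_scale bf_scale algebra_simps)
  qed (rule psd)
  hence "sqrt ((bf L x z)^2) \<le> sqrt (wnorm2 L x * wnorm2 L z)" by (rule real_sqrt_le_mono)
  thus ?thesis by (simp add: real_sqrt_mult)
qed

lemma bf_sym: "bf L x z = bf L z x" unfolding bf_def by simp

lemma wnorm2_neg: "wnorm2 L (- x) = wnorm2 L x"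
  using wnorm2_scale[of L "-1" x] by simp

lemma bf_add_right: "bf L b (u + v) = bf L b u + bf L b v"
  unfolding bf_def by (simp only: matrix_vector_right_distrib inner_add_left inner_add_right) (simp add: field_simps)

lemma wnorm2_diff_bound:
  assumes psd: "\<And>v. 0 \<le> wnorm2 L v"
  shows "\<bar>wnorm2 L (a - b) - wnorm2 L a\<bar>
     \<le> sqrt (wnorm2 L b) * (sqrt (wnorm2 L (a - b)) + sqrt (wnorm2 L a))"
proof -
  define w where "w = a - b"
  have wab: "w = a + (-b)" unfolding w_def by simp
  have e1: "wnorm2 L w = wnorm2 L a + 2 * bf L a (-b) + wnorm2 L b"
    unfolding wab wnorm2_add wnorm2_neg ..
  have sc: "bf L a (-b) = - bf L a b" using bf_scale[of L a "-1" b] by simp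
  have bb: "bf L b b = wnorm2 L b" unfolding bf_def wnorm2_def by simp
  have nb: "bf L b (-b) = - bf L b b" using bf_scale[of L b "-1" b] by simp
  have wa: "w + a = (a + a) + (-b)" unfolding wab by (simp add: algebra_simps)
  have "bf L b (w + a) = bf L b a + bf L b a + bf L b (-b)"
    unfolding wa bf_add_right ..
  hence e3: "bf L b (w + a) = 2 * bf L b a - wnorm2 L b"
    using nb bb by linarith
  have e2: "wnorm2 L w - wnorm2 L a = - bf L b (w + a)"
    using e1 sc bf_sym[of L a b] e3 by linarith
  have c1: "\<bar>bf L b (w + a)\<bar> \<le> sqrt (wnorm2 L b) * sqrt (wnorm2 L (w + a))" by (rule bf_CS[OF psd])
  have pw: "0 \<le> wnorm2 L w" and pa: "0 \<le> wnorm2 L a" by (rule psd)+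
  have bwa: "bf L w a \<le> sqrt (wnorm2 L w) * sqrt (wnorm2 L a)" using bf_CS[OF psd, of w a] by linarith
  have sq: "(sqrt (wnorm2 L w) + sqrt (wnorm2 L a))^2
      = wnorm2 L w + 2 * (sqrt (wnorm2 L w) * sqrt (wnorm2 L a)) + wnorm2 L a"
    using pw pa by (simp add: power2_sum)
  have le2: "wnorm2 L (w + a) \<le> (sqrt (wnorm2 L w) + sqrt (wnorm2 L a))^2"
    unfolding sq wnorm2_add using bwa by linarith
  have c2: "sqrt (wnorm2 L (w + a)) \<le> sqrt (wnorm2 L w) + sqrt (wnorm2 L a)"
    by (rule real_le_lsqrt[OF _ le2]) (simp add: pw pa)
  have "sqrt (wnorm2 L b) * sqrt (wnorm2 L (w + a)) \<le> sqrt (wnorm2 L b) * (sqrt (wnorm2 L w) + sqrt (wnorm2 L a))"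
    using c2 psd[of b] by (intro mult_left_mono) simp_all
  hence "\<bar>wnorm2 L w - wnorm2 L a\<bar> \<le> sqrt (wnorm2 L b) * (sqrt (wnorm2 L w) + sqrt (wnorm2 L a))"
    using e2 c1 by simp
  thus ?thesis unfolding w_def .
qed

lemma psd_inv:
  fixes S :: "real^'n^'n"
  assumes pd: "\<And>x. x \<noteq> 0 \<Longrightarrow> 0 < x \<bullet> (S *v x)"
  shows "0 \<le> wnorm2 (matrix_inv S) a"
proof -
  have inj: "\<forall>x. S *v x = 0 \<longrightarrow> x = 0"
  proof (intro allI impI)
    fix x assume Sx: "S *v x = 0"
    show "x = 0"
    proof (rule ccontr)
      assume "x \<noteq> 0"
      hence "0 < x \<bullet> (S *v x)" by (rule pd)
      thus False unfolding Sx by simp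
    qed
  qed
  have "\<exists>B. B ** S = mat 1" using inj matrix_left_invertible_ker by blast
  hence inv: "invertible S" using invertible_left_inverse by blast
  have "\<exists>A'. S ** A' = mat 1 \<and> A' ** S = mat 1" using inv unfolding invertible_def .
  hence m: "S ** matrix_inv S = mat 1 \<and> matrix_inv S ** S = mat 1"
    unfolding matrix_inv_def by (rule someI_ex)
  define u where "u = matrix_inv S *v a"
  have Su: "S *v u = a" unfolding u_def matrix_vector_mul_assoc using m by simp
  have "wnorm2 (matrix_inv S) a = a \<bullet> u" unfolding wnorm2_def u_def ..
  also have "\<dots> = (S *v u) \<bullet> u" using Su by simp
  also have "\<dots> = u \<bullet> (S *v u)" by (rule inner_commute)
  finally have "wnorm2 (matrix_inv S) a = u \<bullet> (S *v u)" .
  moreover have "0 \<le> u \<bullet> (S *v u)"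
  proof (cases "u = 0")
    case True thus ?thesis by simp
  next
    case False thus ?thesis using pd[OF False] by simp
  qed
  ultimately show ?thesis by simp
qed



lemma Z_lower:
  fixes f :: "'a \<Rightarrow> real"
  assumes P: "prob_space M" and fm: "f \<in> borel_measurable M" and fi: "integrable M f"
    and f0: "\<And>x. 0 \<le> f x"
  shows "exp (- (\<integral>x. f x \<partial>M)) \<le> (\<integral>x. exp (- f x) \<partial>M)"
proof -
  interpret prob_space M by (rule P)
  define n where "n = (\<integral>x. f x \<partial>M)"
  have pw: "exp (-n) * (1 + n - f x) \<le> exp (- f x)" for x
  proof -
    have "exp (-n) * (1 + (n - f x)) \<le> exp (-n) * exp (n - f x)"
      using exp_ge_add_one_self[of "n - f x"] by (intro mult_left_mono) auto
    also have "\<dots> = exp (- f x)" by (simp flip: exp_add)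
    finally show ?thesis by (metis add_diff_eq)
  qed
  have ei: "integrable M (\<lambda>x. exp (- f x))"
    by (rule integrable_const_bound[where B=1]) (use fm f0 in auto)
  have "(\<integral>x. exp (-n) * (1 + n - f x) \<partial>M) \<le> (\<integral>x. exp (- f x) \<partial>M)"
    by (rule integral_mono) (use fi ei pw in auto)
  moreover have "(\<integral>x. exp (-n) * (1 + n - f x) \<partial>M) = exp (-n)"
    using fi by (simp add: n_def prob_space)
  ultimately show ?thesis unfolding n_def by simp
qed

lemma am_gm_aux:
  fixes p q :: real assumes "0 < p" "0 < q"
  shows "(q / p * p^2 + q^2 / (q / p)) / 2 = p * q"
  using assms by (simp add: field_simps power2_eq_square)

lemma am_gm_param:
  fixes x A B :: real
  assumes A0: "0 \<le> A" and B0: "0 \<le> B" and H: "\<And>s. 0 < s \<Longrightarrow> x \<le> (s * A + B / s) / 2"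
  shows "x \<le> sqrt A * sqrt B"
proof (cases "A > 0 \<and> B > 0")
  case True
  define p where "p = sqrt A"
  define q where "q = sqrt B"
  have pp: "0 < p" and qp: "0 < q" using True by (simp_all add: p_def q_def)
  have Ap: "A = p^2" and Bq: "B = q^2" using A0 B0 by (simp_all add: p_def q_def)
  have "x \<le> (q / p * A + B / (q / p)) / 2" by (rule H) (use pp qp in simp)
  also have "\<dots> = p * q" unfolding Ap Bq by (rule am_gm_aux[OF pp qp])
  finally show ?thesis by (simp add: p_def q_def)
next
  case False
  show ?thesis
  proof (rule ccontr)
    assume "\<not> ?thesis"
    hence xp: "x > 0" using False A0 B0 by auto
    show False
    proof (cases "A = 0")
      case True
      define s where "s = (B + 1) / x"
      have sp: "0 < s" using xp B0 by (simp add: s_def)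
      have "x \<le> (s * A + B / s) / 2" by (rule H[OF sp])
      also have "\<dots> = (B * x / (B + 1)) / 2" using True by (simp add: s_def divide_divide_eq_right)
      finally have c1: "x \<le> (B * x / (B + 1)) / 2" .
      have c2: "B * x / (B + 1) \<le> x"
        using B0 xp by (simp add: pos_divide_le_eq mult_left_mono mult.commute)
      have "x \<le> x / 2" using order_trans[OF c1 divide_right_mono[OF c2]] by simp
      thus False using xp by simp
    next
      case nA: False
      hence Bz: "B = 0" using False A0 B0 by auto
      have Ap: "0 < A" using nA A0 by simp
      define s where "s = x / (A + 1)"
      have sp: "0 < s" using xp A0 by (simp add: s_def)
      have "x \<le> (s * A + B / s) / 2" by (rule H[OF sp])
      also have "\<dots> = (x * A / (A + 1)) / 2" using Bz by (simp add: s_def)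
      finally have c1: "x \<le> (x * A / (A + 1)) / 2" .
      have c2: "x * A / (A + 1) \<le> x"
        using A0 xp by (simp add: pos_divide_le_eq mult_left_mono)
      have "x \<le> x / 2" using order_trans[OF c1 divide_right_mono[OF c2]] by simp
      thus False using xp by simp
    qed
  qed
qed

lemma integral_CS:
  fixes u v :: "'a \<Rightarrow> real"
  assumes ui: "integrable M u" and vi: "integrable M v"
    and u0: "\<And>x. 0 \<le> u x" and v0: "\<And>x. 0 \<le> v x"
  shows "integrable M (\<lambda>x. sqrt (u x) * sqrt (v x))"
    and "(\<integral>x. sqrt (u x) * sqrt (v x) \<partial>M) \<le> sqrt (\<integral>x. u x \<partial>M) * sqrt (\<integral>x. v x \<partial>M)"
proof -
  have amgm: "sqrt a * sqrt b \<le> (s * a + b / s) / 2" if "0 \<le> a" "0 \<le> b" "0 < s" for a b s :: real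
  proof -
    have "0 \<le> (sqrt (s * a) - sqrt (b / s))^2" by simp
    also have "\<dots> = s * a + b / s - 2 * (sqrt (s*a) * sqrt (b/s))"
      using that by (simp add: power2_diff)
    also have "sqrt (s*a) * sqrt (b/s) = sqrt a * sqrt b"
      using that by (simp add: real_sqrt_mult[symmetric] field_simps)
    finally show ?thesis by simp
  qed
  have um: "u \<in> borel_measurable M" and vm: "v \<in> borel_measurable M" using ui vi by auto
  show I: "integrable M (\<lambda>x. sqrt (u x) * sqrt (v x))"
  proof (rule Bochner_Integration.integrable_bound[where f="\<lambda>x. (1 * u x + v x / 1) / 2"])
    show "integrable M (\<lambda>x. (1 * u x + v x / 1) / 2)" using ui vi by auto
    show "(\<lambda>x. sqrt (u x) * sqrt (v x)) \<in> borel_measurable M" using um vm by measurable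
    show "AE x in M. norm (sqrt (u x) * sqrt (v x)) \<le> norm ((1 * u x + v x / 1) / 2)"
      using amgm[OF u0 v0, of 1] u0 v0 by (auto simp: abs_mult)
  qed
  show "(\<integral>x. sqrt (u x) * sqrt (v x) \<partial>M) \<le> sqrt (\<integral>x. u x \<partial>M) * sqrt (\<integral>x. v x \<partial>M)"
  proof (rule am_gm_param)
    show "0 \<le> (\<integral>x. u x \<partial>M)" "0 \<le> (\<integral>x. v x \<partial>M)" using u0 v0 by auto
    fix s :: real assume s: "0 < s"
    have "(\<integral>x. sqrt (u x) * sqrt (v x) \<partial>M) \<le> (\<integral>x. (s * u x + v x / s) / 2 \<partial>M)"
      by (rule integral_mono) (use I ui vi amgm[OF u0 v0 s] in auto)
    also have "\<dots> = (s * (\<integral>x. u x \<partial>M) + (\<integral>x. v x \<partial>M) / s) / 2"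
      using ui vi by simp
    finally show "(\<integral>x. sqrt (u x) * sqrt (v x) \<partial>M) \<le> (s * (\<integral>x. u x \<partial>M) + (\<integral>x. v x \<partial>M) / s) / 2" .
  qed
qed



lemma KL_bound:
  fixes M :: "'a measure" and f g :: "'a \<Rightarrow> real"
  assumes P: "prob_space M"
    and fm: "f \<in> borel_measurable M" and gm: "g \<in> borel_measurable M"
    and f0: "\<And>x. 0 \<le> f x" and g0: "\<And>x. 0 \<le> g x"
    and fi: "integrable M f" and gi: "integrable M g"
  shows "KL_div (reweight M f) (reweight M g)
           \<le> ereal (2 * exp (\<integral>x. f x \<partial>M) * (\<integral>x. \<bar>f x - g x\<bar> \<partial>M))"
proof -
  interpret prob_space M by (rule P)
  note fm[measurable] gm[measurable]
  define Z1 where "Z1 = (\<integral>x. exp (- f x) \<partial>M)"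
  define Z2 where "Z2 = (\<integral>x. exp (- g x) \<partial>M)"
  define n where "n = (\<integral>x. f x \<partial>M)"
  define D where "D = (\<integral>x. \<bar>f x - g x\<bar> \<partial>M)"
  have Z1l: "exp (- n) \<le> Z1" unfolding n_def Z1_def by (rule Z_lower[OF P fm fi f0])
  have Z2l: "exp (- (\<integral>x. g x \<partial>M)) \<le> Z2" unfolding Z2_def by (rule Z_lower[OF P gm gi g0])
  have Z1p: "0 < Z1" using Z1l by (meson exp_gt_zero less_le_trans)
  have Z2p: "0 < Z2" using Z2l by (meson exp_gt_zero less_le_trans)
  have e1i: "integrable M (\<lambda>x. exp (- f x))"
    by (rule integrable_const_bound[where B=1]) (use f0 in auto)
  have e2i: "integrable M (\<lambda>x. exp (- g x))"
    by (rule integrable_const_bound[where B=1]) (use g0 in auto)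
  have Di: "integrable M (\<lambda>x. \<bar>f x - g x\<bar>)" using fi gi by auto
  have D0: "0 \<le> D" unfolding D_def by simp
  define p1 where "p1 x = exp (- f x) / Z1" for x
  define p2 where "p2 x = exp (- g x) / Z2" for x
  have p1p: "0 < p1 x" for x using Z1p by (simp add: p1_def)
  have p2p: "0 < p2 x" for x using Z2p by (simp add: p2_def)
  have p1le: "p1 x \<le> 1 / Z1" for x
    using Z1p f0[of x] by (simp add: p1_def divide_right_mono)
  have p1m[measurable]: "p1 \<in> borel_measurable M" unfolding p1_def by measurable
  have p2m[measurable]: "p2 \<in> borel_measurable M" unfolding p2_def by measurable
  have p1i: "integrable M p1" unfolding p1_def using e1i by simp
  have p1int: "(\<integral>x. p1 x \<partial>M) = 1" unfolding p1_def using Z1p by (simp add: Z1_def)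
  have R1: "reweight M f = density M (\<lambda>x. ennreal (p1 x))"
    unfolding reweight_def p1_def Z1_def ..
  have R2: "reweight M g = density M (\<lambda>x. ennreal (p2 x))"
    unfolding reweight_def p2_def Z2_def ..
  define h where "h x = p1 x / p2 x" for x
  have h0: "0 \<le> h x" for x using p1p[of x] p2p[of x] by (simp add: h_def)
  have hm[measurable]: "h \<in> borel_measurable M" unfolding h_def by measurable
  define Q1 where "Q1 = density M (\<lambda>x. ennreal (p1 x))"
  define Q2 where "Q2 = density M (\<lambda>x. ennreal (p2 x))"
  have mulh: "ennreal (p2 x) * ennreal (h x) = ennreal (p1 x)" for x
  proof -
    have "p2 x * h x = p1 x" using p2p[of x] by (simp add: h_def)
    thus ?thesis using p2p[of x] h0[of x] by (simp add: ennreal_mult[symmetric])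
  qed
  have dd: "density Q2 (\<lambda>x. ennreal (h x)) = Q1"
    unfolding Q1_def Q2_def by (subst density_density_eq) (auto simp: mulh)
  have sets1: "sets Q1 = sets M" and sets2: "sets Q2 = sets M" unfolding Q1_def Q2_def by auto
  have ac: "absolutely_continuous Q2 Q1"
    unfolding dd[symmetric] by (rule absolutely_continuousI_density) (simp add: Q2_def)
  have "emeasure Q1 (space Q1) = (\<integral>\<^sup>+ x. ennreal (p1 x) * indicator (space M) x \<partial>M)"
    unfolding Q1_def by (subst emeasure_density) auto
  also have "\<dots> = (\<integral>\<^sup>+ x. ennreal (p1 x) \<partial>M)"
    by (rule nn_integral_cong) simp
  also have "\<dots> = ennreal (\<integral>x. p1 x \<partial>M)"
    by (rule nn_integral_eq_integral[OF p1i]) (use p1p in \<open>auto intro: less_imp_le\<close>)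
  finally have "emeasure Q1 (space Q1) = 1" using p1int by simp
  then interpret Q1: prob_space Q1 by (rule prob_spaceI)
  have sf: "sigma_finite_measure Q1" by (rule Q1.sigma_finite_measure_axioms)
  have RN: "AE x in Q2. ennreal (h x) = RN_deriv Q2 Q1 x"
    by (rule RN_deriv_unique_sigma_finite[OF _ dd sf]) (simp add: Q2_def)
  have AE1: "AE x in Q1. ennreal (h x) = RN_deriv Q2 Q1 x"
    by (rule absolutely_continuous_AE[OF _ ac RN]) (simp add: sets1 sets2)
  define Lp where "Lp = max (ln (Z2 / Z1)) 0"
  define G where "G x = g x - f x + ln Z2 - ln Z1" for x
  have Gm[measurable]: "G \<in> borel_measurable M" unfolding G_def by measurable
  have hG: "ln (h x) = G x" for x
  proof -
    have "ln (h x) = ln (p1 x) - ln (p2 x)" using p1p[of x] p2p[of x] by (simp add: h_def ln_div)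
    also have "ln (p1 x) = - f x - ln Z1" using Z1p by (simp add: p1_def ln_div)
    also have "ln (p2 x) = - g x - ln Z2" using Z2p by (simp add: p2_def ln_div)
    finally show ?thesis by (simp add: G_def)
  qed
  define H where "H x = \<bar>f x - g x\<bar> / Z1 + p1 x * Lp" for x
  have Hi: "integrable M H" unfolding H_def using Di p1i by auto
  have H0: "0 \<le> H x" for x
    unfolding H_def using Z1p p1p[of x] by (auto simp: Lp_def intro!: add_nonneg_nonneg mult_nonneg_nonneg)
  have HI: "(\<integral>x. H x \<partial>M) = D / Z1 + Lp"
    unfolding H_def using Di p1i p1int by (simp add: D_def)
  have LpD: "Lp \<le> D / Z1"
  proof -
    have "ln (Z2 / Z1) \<le> Z2 / Z1 - 1" using Z1p Z2p by (intro ln_le_minus_one) simp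
    also have "\<dots> = (Z2 - Z1) / Z1" using Z1p by (simp add: field_simps)
    also have "Z2 - Z1 = (\<integral>x. exp (- g x) - exp (- f x) \<partial>M)"
      unfolding Z1_def Z2_def using e1i e2i by simp
    also have "\<dots> \<le> D" unfolding D_def
      by (rule integral_mono) (use e1i e2i Di exp_diff_le[OF f0 g0] in auto)
    finally have "ln (Z2 / Z1) \<le> D / Z1" using Z1p by (simp add: divide_right_mono)
    thus ?thesis unfolding Lp_def using D0 Z1p by simp
  qed
  have pw: "ennreal (p1 x) * ennreal (G x) \<le> ennreal (H x)" for x
  proof (cases "G x \<le> 0")
    case True thus ?thesis by (simp add: ennreal_neg)
  next
    case False
    have lnq: "ln (Z2 / Z1) = ln Z2 - ln Z1" using Z1p Z2p by (simp add: ln_div)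
    have "g x - f x \<le> \<bar>f x - g x\<bar>" by linarith
    moreover have "ln Z2 - ln Z1 \<le> Lp" unfolding Lp_def lnq by simp
    ultimately have "G x \<le> \<bar>f x - g x\<bar> + Lp" unfolding G_def by linarith
    hence "p1 x * G x \<le> p1 x * (\<bar>f x - g x\<bar> + Lp)" using p1p[of x] by (simp add: mult_left_mono)
    also have "\<dots> = p1 x * \<bar>f x - g x\<bar> + p1 x * Lp" by (simp add: algebra_simps)
    also have "p1 x * \<bar>f x - g x\<bar> \<le> 1 / Z1 * \<bar>f x - g x\<bar>" by (rule mult_right_mono[OF p1le]) simp
    finally have "p1 x * G x \<le> H x" unfolding H_def by simp
    hence "ennreal (p1 x * G x) \<le> ennreal (H x)" by (rule ennreal_leI)
    thus ?thesis using p1p[of x] False by (simp add: ennreal_mult)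
  qed
  define PP where "PP = (\<integral>\<^sup>+ x. ennreal (ln (enn2real (RN_deriv Q2 Q1 x))) \<partial>Q1)"
  define NN where "NN = (\<integral>\<^sup>+ x. ennreal (- ln (enn2real (RN_deriv Q2 Q1 x))) \<partial>Q1)"
  have KL: "KL_div (reweight M f) (reweight M g) = enn2ereal PP - enn2ereal NN"
    unfolding KL_div_def R1 R2 Q1_def[symmetric] Q2_def[symmetric] PP_def NN_def
    using sets1 sets2 ac by simp
  have AE2: "AE x in Q1. ennreal (ln (enn2real (RN_deriv Q2 Q1 x))) = ennreal (G x)"
    using AE1
  proof (rule AE_mp)
    show "AE x in Q1. ennreal (h x) = RN_deriv Q2 Q1 x \<longrightarrow> ennreal (ln (enn2real (RN_deriv Q2 Q1 x))) = ennreal (G x)"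
    proof (rule AE_I2, rule impI)
      fix x assume "ennreal (h x) = RN_deriv Q2 Q1 x"
      hence "enn2real (RN_deriv Q2 Q1 x) = h x" using h0[of x] by (metis enn2real_ennreal)
      thus "ennreal (ln (enn2real (RN_deriv Q2 Q1 x))) = ennreal (G x)" using hG[of x] by simp
    qed
  qed
  have "PP = (\<integral>\<^sup>+ x. ennreal (G x) \<partial>Q1)"
    unfolding PP_def by (rule nn_integral_cong_AE[OF AE2])
  also have "\<dots> = (\<integral>\<^sup>+ x. ennreal (p1 x) * ennreal (G x) \<partial>M)"
    unfolding Q1_def by (rule nn_integral_density) auto
  also have "\<dots> \<le> (\<integral>\<^sup>+ x. ennreal (H x) \<partial>M)"
    by (rule nn_integral_mono) (rule pw)
  also have "\<dots> = ennreal (D / Z1 + Lp)"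
    using nn_integral_eq_integral[OF Hi] H0 HI by simp
  finally have PPle: "PP \<le> ennreal (D / Z1 + Lp)" .
  have "D / Z1 + Lp \<le> 2 * (D / Z1)" using LpD by simp
  also have "D / Z1 \<le> exp n * D"
  proof -
    have "1 / Z1 \<le> 1 / exp (- n)"
      by (rule divide_left_mono[OF Z1l]) (use Z1p in auto)
    hence i: "1 / Z1 \<le> exp n" by (simp add: exp_minus divide_inverse)
    have "D / Z1 = 1 / Z1 * D" by simp
    also have "\<dots> \<le> exp n * D" by (rule mult_right_mono[OF i D0])
    finally show ?thesis .
  qed
  finally have Bd: "D / Z1 + Lp \<le> 2 * exp n * D" by simp
  have "KL_div (reweight M f) (reweight M g) \<le> enn2ereal PP"
    unfolding KL by (rule ereal_diff_le_self) simp
  also have "enn2ereal PP \<le> enn2ereal (ennreal (D / Z1 + Lp))"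
    using PPle by (simp add: less_eq_ennreal.rep_eq)
  also have "\<dots> = ereal (D / Z1 + Lp)"
  proof (rule enn2ereal_ennreal)
    have "0 \<le> D / Z1" using D0 Z1p by simp
    moreover have "0 \<le> Lp" unfolding Lp_def by simp
    ultimately show "0 \<le> D / Z1 + Lp" by simp
  qed
  also have "\<dots> \<le> ereal (2 * exp n * D)" using Bd by simp
  finally show ?thesis unfolding n_def D_def .
qed

theorem mainTheorem11:
  fixes \<Theta> :: "'a::{banach, second_countable_topology} set"
    and \<mu>\<theta> :: "'a measure"
    and \<mu>\<delta> :: "'d::t2_space measure"
    and ev :: "'d \<Rightarrow> 'a \<Rightarrow> 'u::banach"
    and \<O> :: "'u \<Rightarrow> real^'n"
    and \<M> :: "'a \<Rightarrow> 'u"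
    and \<Sigma> :: "real^'n^'n"
    and y :: "real^'n"
    and \<Phi>app :: "'a \<Rightarrow> real"
    and \<Phi>joint :: "'a \<times> 'd \<Rightarrow> real"
  assumes \<Theta>_borel: "\<Theta> \<in> sets borel"
    and sets_\<mu>\<theta>: "sets \<mu>\<theta> = sets (restrict_space borel \<Theta>)"
    and prob_\<theta>: "prob_space \<mu>\<theta>"
    and radon: "radon_space TYPE('d)"
    and sets_\<mu>\<delta>: "sets \<mu>\<delta> = sets borel"
    and prob_\<delta>: "prob_space \<mu>\<delta>"
    and ev_maps: "\<And>d1 d2. (\<forall>t\<in>\<Theta>. ev d1 t = ev d2 t) \<Longrightarrow> d1 = d2"
    and ev_meas: "(\<lambda>(t, d). ev d t) \<in> borel_measurable (\<mu>\<theta> \<Otimes>\<^sub>M \<mu>\<delta>)"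
    and O_lin: "bounded_linear \<O>"
    and M_meas: "\<M> \<in> borel_measurable \<mu>\<theta>"
    and \<Sigma>_sym: "transpose \<Sigma> = \<Sigma>"
    and \<Sigma>_pd: "\<And>x. x \<noteq> 0 \<Longrightarrow> 0 < x \<bullet> (\<Sigma> *v x)"
    and \<Phi>app_def: "\<And>t. \<Phi>app t = 1/2 * wnorm2 (matrix_inv \<Sigma>) (y - \<O> (\<M> t))"
    and \<Phi>joint_def: "\<And>t d. \<Phi>joint (t, d) =
                       1/2 * wnorm2 (matrix_inv \<Sigma>) (y - \<O> (\<M> t) - \<O> (ev d t))"
    and app_L1: "integrable \<mu>\<theta> \<Phi>app"
    and joint_L1: "integrable (\<mu>\<theta> \<Otimes>\<^sub>M \<mu>\<delta>) \<Phi>joint"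
  shows "let nJ = (\<integral>z. \<bar>\<Phi>joint z\<bar> \<partial>(\<mu>\<theta> \<Otimes>\<^sub>M \<mu>\<delta>));
             nA = (\<integral>t. \<bar>\<Phi>app t\<bar> \<partial>\<mu>\<theta>);
             C = sqrt 2 * exp (2 * nJ + 2 * nA) * (sqrt nJ + sqrt nA);
             F = (\<lambda>(t, d). wnorm2 (matrix_inv \<Sigma>) (\<O> (ev d t)));
             post_app = reweight (\<mu>\<theta> \<Otimes>\<^sub>M \<mu>\<delta>) (\<lambda>(t, d). \<Phi>app t);
             post_joint = reweight (\<mu>\<theta> \<Otimes>\<^sub>M \<mu>\<delta>) \<Phi>joint
         in max (KL_div post_app post_joint) (KL_div post_joint post_app)
            \<le> (if integrable (\<mu>\<theta> \<Otimes>\<^sub>M \<mu>\<delta>) F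
                then ereal (C * sqrt (\<integral>z. \<bar>F z\<bar> \<partial>(\<mu>\<theta> \<Otimes>\<^sub>M \<mu>\<delta>)))
                else \<infinity>)"
proof -
  define M0 where "M0 = \<mu>\<theta> \<Otimes>\<^sub>M \<mu>\<delta>"
  define L where "L = matrix_inv \<Sigma>"
  have PM: "prob_space M0" unfolding M0_def by (rule prob_space_pair[OF prob_\<theta> prob_\<delta>])
  interpret PM: prob_space M0 by (rule PM)
  interpret D: prob_space \<mu>\<delta> by (rule prob_\<delta>)
  have psd: "\<And>v. 0 \<le> wnorm2 L v" unfolding L_def by (rule psd_inv[OF \<Sigma>_pd])
  define Fa where "Fa = (\<lambda>(t::'a, d::'d). \<Phi>app t)"
  define F where "F = (\<lambda>(t, d). wnorm2 L (\<O> (ev d t)))"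
  have A0: "0 \<le> \<Phi>app t" for t unfolding \<Phi>app_def using psd unfolding L_def by simp
  have J0: "0 \<le> \<Phi>joint z" for z by (cases z) (use psd in \<open>simp add: \<Phi>joint_def L_def\<close>)
  have Fa0: "0 \<le> Fa z" for z by (cases z) (simp add: Fa_def A0)
  have F0: "0 \<le> F z" for z by (cases z) (simp add: F_def psd)
  have Am[measurable]: "\<Phi>app \<in> borel_measurable \<mu>\<theta>" using app_L1 by auto
  have Jm[measurable]: "\<Phi>joint \<in> borel_measurable M0" using joint_L1 unfolding M0_def by auto
  have Fa_eq: "Fa = (\<lambda>x. \<Phi>app (fst x))" unfolding Fa_def by auto
  have dfst: "distr M0 \<mu>\<theta> fst = \<mu>\<theta>" unfolding M0_def by (rule D.distr_pair_fst)
  have fstm: "fst \<in> measurable M0 \<mu>\<theta>" unfolding M0_def by simp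
  have Fam[measurable]: "Fa \<in> borel_measurable M0" unfolding Fa_eq using fstm by measurable
  have Fai: "integrable M0 Fa"
    using integrable_distr_eq[OF fstm Am] app_L1 unfolding dfst Fa_eq by simp
  have FaI: "(\<integral>z. Fa z \<partial>M0) = (\<integral>t. \<bar>\<Phi>app t\<bar> \<partial>\<mu>\<theta>)"
    using integral_distr[OF fstm Am] A0 unfolding dfst Fa_eq by simp
  have Ji: "integrable M0 \<Phi>joint" using joint_L1 unfolding M0_def .
  have JI: "(\<integral>z. \<Phi>joint z \<partial>M0) = (\<integral>z. \<bar>\<Phi>joint z\<bar> \<partial>M0)" using J0 by simp
  define nJ where "nJ = (\<integral>z. \<bar>\<Phi>joint z\<bar> \<partial>M0)"
  define nA where "nA = (\<integral>t. \<bar>\<Phi>app t\<bar> \<partial>\<mu>\<theta>)"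
  define D where "D = (\<integral>z. \<bar>Fa z - \<Phi>joint z\<bar> \<partial>M0)"
  have nJ0: "0 \<le> nJ" and nA0: "0 \<le> nA" and D0: "0 \<le> D" unfolding nJ_def nA_def D_def by auto
  have K1: "KL_div (reweight M0 Fa) (reweight M0 \<Phi>joint) \<le> ereal (2 * exp nA * D)"
    using KL_bound[OF PM Fam Jm Fa0 J0 Fai Ji] unfolding FaI nA_def D_def .
  have K2: "KL_div (reweight M0 \<Phi>joint) (reweight M0 Fa) \<le> ereal (2 * exp nJ * D)"
    using KL_bound[OF PM Jm Fam J0 Fa0 Ji Fai] unfolding JI nJ_def D_def
    by (simp add: abs_minus_commute)
  define C where "C = sqrt 2 * exp (2 * nJ + 2 * nA) * (sqrt nJ + sqrt nA)"
  have main: "max (KL_div (reweight M0 Fa) (reweight M0 \<Phi>joint)) (KL_div (reweight M0 \<Phi>joint) (reweight M0 Fa))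
     \<le> (if integrable M0 F then ereal (C * sqrt (\<integral>z. \<bar>F z\<bar> \<partial>M0)) else \<infinity>)"
  proof (cases "integrable M0 F")
    case False
    have "max (KL_div (reweight M0 Fa) (reweight M0 \<Phi>joint)) (KL_div (reweight M0 \<Phi>joint) (reweight M0 Fa)) \<le> (\<infinity>::ereal)"
      by (rule ereal_less_eq(1))
    thus ?thesis by (simp only: False if_False)
  next
    case True
    have Fm[measurable]: "F \<in> borel_measurable M0" using True by auto
    define IF where "IF = (\<integral>z. \<bar>F z\<bar> \<partial>M0)"
    have IF': "IF = (\<integral>z. F z \<partial>M0)" unfolding IF_def using F0 by simp
    have pw: "\<bar>Fa z - \<Phi>joint z\<bar> \<le> sqrt 2 / 2 * (sqrt (F z) * sqrt (\<Phi>joint z) + sqrt (F z) * sqrt (Fa z))" for z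
    proof -
      obtain t d where z: "z = (t, d)" by (cases z)
      define a where "a = y - \<O> (\<M> t)"
      define b where "b = \<O> (ev d t)"
      have e1: "Fa z = 1/2 * wnorm2 L a" unfolding z Fa_def a_def L_def by (simp add: \<Phi>app_def)
      have e2: "\<Phi>joint z = 1/2 * wnorm2 L (a - b)" unfolding z a_def b_def L_def by (simp add: \<Phi>joint_def)
      have e3: "F z = wnorm2 L b" unfolding z F_def b_def by simp
      have "Fa z - \<Phi>joint z = 1/2 * (wnorm2 L a - wnorm2 L (a - b))"
        unfolding e1 e2 by (simp add: right_diff_distrib)
      hence "\<bar>Fa z - \<Phi>joint z\<bar> = \<bar>1/2\<bar> * \<bar>wnorm2 L a - wnorm2 L (a - b)\<bar>"
        by (simp only: abs_mult)
      also have "\<dots> = 1/2 * \<bar>wnorm2 L (a - b) - wnorm2 L a\<bar>"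
        by (simp only: abs_minus_commute[of "wnorm2 L a"])
      also have "\<dots> \<le> 1/2 * (sqrt (wnorm2 L b) * (sqrt (wnorm2 L (a - b)) + sqrt (wnorm2 L a)))"
        using wnorm2_diff_bound[OF psd, of a b] by simp
      also have "wnorm2 L (a - b) = 2 * \<Phi>joint z" using e2 by simp
      also have "wnorm2 L a = 2 * Fa z" using e1 by simp
      also have "1/2 * (sqrt (wnorm2 L b) * (sqrt (2 * \<Phi>joint z) + sqrt (2 * Fa z)))
           = sqrt 2 / 2 * (sqrt (F z) * sqrt (\<Phi>joint z) + sqrt (F z) * sqrt (Fa z))"
        unfolding e3 real_sqrt_mult by (simp add: algebra_simps)
      finally show ?thesis .
    qed
    note CS1 = integral_CS[OF True Ji F0 J0]
    note CS2 = integral_CS[OF True Fai F0 Fa0]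
    have "D \<le> (\<integral>z. sqrt 2 / 2 * (sqrt (F z) * sqrt (\<Phi>joint z) + sqrt (F z) * sqrt (Fa z)) \<partial>M0)"
      unfolding D_def by (rule integral_mono) (use Fai Ji CS1(1) CS2(1) pw in auto)
    also have "\<dots> = sqrt 2 / 2 * ((\<integral>z. sqrt (F z) * sqrt (\<Phi>joint z) \<partial>M0) + (\<integral>z. sqrt (F z) * sqrt (Fa z) \<partial>M0))"
      using CS1(1) CS2(1) by simp
    also have "\<dots> \<le> sqrt 2 / 2 * (sqrt IF * sqrt nJ + sqrt IF * sqrt nA)"
      using CS1(2) CS2(2) unfolding IF' nJ_def JI[symmetric] FaI nA_def
      by (intro mult_left_mono add_mono) auto
    finally have Dle: "D \<le> sqrt 2 / 2 * (sqrt IF * (sqrt nJ + sqrt nA))" by (simp add: algebra_simps)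
    have bnd: "2 * exp m * D \<le> C * sqrt IF" if "0 \<le> m" "m \<le> 2 * nJ + 2 * nA" for m
    proof -
      have "2 * exp m * D \<le> 2 * exp (2 * nJ + 2 * nA) * D"
        using that D0 by (intro mult_right_mono) auto
      also have "\<dots> \<le> 2 * exp (2 * nJ + 2 * nA) * (sqrt 2 / 2 * (sqrt IF * (sqrt nJ + sqrt nA)))"
        using Dle by (intro mult_left_mono) auto
      also have "\<dots> = C * sqrt IF" unfolding C_def by (simp add: algebra_simps)
      finally show ?thesis .
    qed
    have "KL_div (reweight M0 Fa) (reweight M0 \<Phi>joint) \<le> ereal (C * sqrt IF)"
      using bnd[of nA] nA0 nJ0 by (intro order_trans[OF K1]) simp
    moreover have "KL_div (reweight M0 \<Phi>joint) (reweight M0 Fa) \<le> ereal (C * sqrt IF)"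
      using bnd[of nJ] nA0 nJ0 by (intro order_trans[OF K2]) simp
    ultimately show ?thesis using True unfolding IF_def by simp
  qed
  show ?thesis
    using main unfolding Let_def M0_def[symmetric] L_def[symmetric] C_def nJ_def nA_def F_def Fa_def .
qed

end
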